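(* Let $n\ge1$, $\mathfrak g=sl(n+1,\mathbb C)$, $M=\mathbb C[p_1,\dots,p_n,q_1,\dots,q_n]$ with Lie bracket $[\cdot,\cdot]_\ast$, and let $\Phi_0:\mathfrak g\to M$, $\Phi_0(X)=\tilde X$. For every $a\in\mathbb C$, the map $\Phi_a:\mathfrak g\to M[[t]]$, $\Phi_a(X)=\tilde X+ta\varphi_1(X)$, is a formal deformation of $\Phi_0$, i.e. $\Phi_a([X,Y])=[\Phi_a(X),\Phi_a(Y)]_\ast$ for all $X,Y\in\mathfrak g$ (the bracket being extended $\mathbb C[[t]]$-bilinearly to formal series).
   Context: $E_{ij}$ denotes the $(n+1)\times(n+1)$ matrix with $1$ in entry $(i,j)$ and $0$ elsewhere. Let $\Psi(p,q)$ be the $(n+1)\times(n+1)$ matrix whose first row is $(-\sum_j p_jq_j,\ q_1,\dots,q_n)$ and whose $(k+1)$-th row ($1\le k\le n$) is $p_k$ times the first row. For $X\in\mathfrak g$, $\tilde X(p,q)=\operatorname{Tr}(\Psi(p,q)X)$. Write $x=(p_1,\dots,p_n,q_1,\dots,q_n)$, let $\Lambda^{k,n+k}=1$, $\Lambda^{n+k,k}=-1$ ($1\le k\le n$), $\Lambda^{ij}=0$ otherwise, $P^l(u,v)=\sum\Lambda^{i_1j_1}\cdots\Lambda^{i_lj_l}\partial^l_{x_{i_1}\cdots x_{i_l}}u\,\partial^l_{x_{j_1}\cdots x_{j_l}}v$, and $[u,v]_\ast=\sum_{l\ge0}\frac{(-1/4)^l}{(2l+1)!}P^{2l+1}(u,v)$.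 The linear map $\varphi_1:\mathfrak g\to M$ is determined by $\varphi_1(E_{11}-E_{22})=1$, $\varphi_1(E_{kk}-E_{k+1,k+1})=0$ for $k=2,\dots,n$, $\varphi_1(E_{1,k+1})=p_k$ for $k=1,\dots,n$, and $\varphi_1(E_{ij})=0$ for $i\ge2$, $j\ne i$. *)

theory Defs
  imports Complex_Main "HOL-Library.Poly_Mapping" "HOL-Library.Groups_Big_Fun"
    "HOL-Computational_Algebra.Formal_Power_Series"
begin

text \<open>M = C[x_1,...,x_{2n}] with x_k = p_k, x_{n+k} = q_k (1 <= k <= n).
  Polynomials are finitely supported maps from monomials (exponent vectors
  nat =>0 nat) to coefficients.\<close>

type_synonym mpoly = "(nat \<Rightarrow>\<^sub>0 nat) \<Rightarrow>\<^sub>0 complex"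

definition mconst :: "complex \<Rightarrow> mpoly" where
  "mconst c = Poly_Mapping.single 0 c"

definition mvar :: "nat \<Rightarrow> mpoly" where
  "mvar i = Poly_Mapping.single (Poly_Mapping.single i 1) 1"

definition pvar :: "nat \<Rightarrow> mpoly" where "pvar k = mvar k"
definition qvar :: "nat \<Rightarrow> nat \<Rightarrow> mpoly" where "qvar n k = mvar (n + k)"

definition pderiv_m :: "nat \<Rightarrow> mpoly \<Rightarrow> mpoly" where
  "pderiv_m i u = sum (\<lambda>m. Poly_Mapping.single (m - Poly_Mapping.single i 1)
        (of_nat (Poly_Mapping.lookup m i) * Poly_Mapping.lookup u m)) (Poly_Mapping.keys u)"

definition pderivs :: "nat list \<Rightarrow> mpoly \<Rightarrow> mpoly" where
  "pderivs is u = foldr pderiv_m is u"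

definition Lam :: "nat \<Rightarrow> nat \<Rightarrow> nat \<Rightarrow> complex" where
  "Lam n i j = (if 1 \<le> i \<and> i \<le> n \<and> j = n + i then 1
                else if 1 \<le> j \<and> j \<le> n \<and> i = n + j then -1 else 0)"

definition idx_lists :: "nat \<Rightarrow> nat \<Rightarrow> nat list set" where
  "idx_lists n l = {is. length is = l \<and> set is \<subseteq> {1..2*n}}"

definition Pl :: "nat \<Rightarrow> nat \<Rightarrow> mpoly \<Rightarrow> mpoly \<Rightarrow> mpoly" where
  "Pl n l u v = (\<Sum>is\<in>idx_lists n l. \<Sum>js\<in>idx_lists n l.
      mconst (\<Prod>k<l. Lam n (is ! k) (js ! k)) * pderivs is u * pderivs js v)"

text \<open>Moyal-type bracket; the sum over l is a finitely supported sum.\<close>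
definition star_bracket :: "nat \<Rightarrow> mpoly \<Rightarrow> mpoly \<Rightarrow> mpoly" where
  "star_bracket n u v = Sum_any (\<lambda>l::nat.
      mconst ((-1/4) ^ l / of_nat (fact (2*l+1))) * Pl n (2*l+1) u v)"

definition star_bracket_fps :: "nat \<Rightarrow> mpoly fps \<Rightarrow> mpoly fps \<Rightarrow> mpoly fps" where
  "star_bracket_fps n F G = Abs_fps (\<lambda>k. \<Sum>i\<le>k. star_bracket n (fps_nth F i) (fps_nth G (k - i)))"

text \<open>(n+1)x(n+1) complex matrices as functions, indices 1..n+1, zero outside.\<close>
type_synonym cmat = "nat \<Rightarrow> nat \<Rightarrow> complex"

definition sl :: "nat \<Rightarrow> cmat set" where
  "sl n = {X. (\<forall>i j. \<not> (i \<in> {1..n+1} \<and> j \<in> {1..n+1}) \<longrightarrow> X i j = 0)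
              \<and> (\<Sum>i=1..n+1. X i i) = 0}"

definition mat_mult :: "nat \<Rightarrow> cmat \<Rightarrow> cmat \<Rightarrow> cmat" where
  "mat_mult n X Y = (\<lambda>i j. \<Sum>k=1..n+1. X i k * Y k j)"

definition commutator :: "nat \<Rightarrow> cmat \<Rightarrow> cmat \<Rightarrow> cmat" where
  "commutator n X Y = (\<lambda>i j. mat_mult n X Y i j - mat_mult n Y X i j)"

definition Emat :: "nat \<Rightarrow> nat \<Rightarrow> cmat" where
  "Emat i j = (\<lambda>a b. if a = i \<and> b = j then 1 else 0)"

definition Psi_row1 :: "nat \<Rightarrow> nat \<Rightarrow> mpoly" where
  "Psi_row1 n j = (if j = 1 then - (\<Sum>k=1..n. pvar k * qvar n k) else qvar n (j - 1))"

definition Psi :: "nat \<Rightarrow> nat \<Rightarrow> nat \<Rightarrow> mpoly" where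
  "Psi n i j = (if i = 1 then Psi_row1 n j else pvar (i - 1) * Psi_row1 n j)"

definition tilde :: "nat \<Rightarrow> cmat \<Rightarrow> mpoly" where
  "tilde n X = (\<Sum>i=1..n+1. \<Sum>j=1..n+1. Psi n i j * mconst (X j i))"

definition Phi :: "nat \<Rightarrow> (cmat \<Rightarrow> mpoly) \<Rightarrow> complex \<Rightarrow> cmat \<Rightarrow> mpoly fps" where
  "Phi n \<phi> a X = fps_const (tilde n X) + fps_X * fps_const (mconst a * \<phi> X)"

end

theory Submission
  imports Defs
begin


abbreviation "dl i \<equiv> Poly_Mapping.single i (1::nat)"

definition dterm :: "nat \<Rightarrow> mpoly \<Rightarrow> (nat \<Rightarrow>\<^sub>0 nat) \<Rightarrow> mpoly" where
  "dterm i u m = Poly_Mapping.single (m - dl i) (of_nat (Poly_Mapping.lookup m i) * Poly_Mapping.lookup u m)"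

lemma D_superset:
  assumes "finite K" "Poly_Mapping.keys u \<subseteq> K"
  shows "pderiv_m i u = (\<Sum>m\<in>K. dterm i u m)"
  unfolding pderiv_m_def dterm_def
  by (rule sum.mono_neutral_left) (use assms in \<open>auto simp: in_keys_iff\<close>)

lemma D_add: "pderiv_m i (u + v) = pderiv_m i u + pderiv_m i v"
proof -
  let ?K = "Poly_Mapping.keys u \<union> Poly_Mapping.keys v"
  have "pderiv_m i (u+v) = (\<Sum>m\<in>?K. dterm i (u+v) m)"
    using keys_add[of u v] by (intro D_superset) auto
  also have "\<dots> = (\<Sum>m\<in>?K. dterm i u m) + (\<Sum>m\<in>?K. dterm i v m)"
    by (simp add: dterm_def lookup_add distrib_left single_add sum.distrib)
  also have "\<dots> = pderiv_m i u + pderiv_m i v"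
    using D_superset[of ?K u i] D_superset[of ?K v i] by simp
  finally show ?thesis .
qed

lemma D_zero [simp]: "pderiv_m i 0 = 0"
  by (simp add: pderiv_m_def)

lemma D_sum: "pderiv_m i (sum g S) = (\<Sum>s\<in>S. pderiv_m i (g s))"
  by (induction S rule: infinite_finite_induct) (auto simp: D_add)

lemma D_uminus: "pderiv_m i (- u) = - pderiv_m i u"
  using D_add[of i u "-u"] by (simp add: eq_neg_iff_add_eq_0 add.commute)

lemma D_diff: "pderiv_m i (u - v) = pderiv_m i u - pderiv_m i v"
  using D_add[of i u "-v"] by (simp add: D_uminus)

lemma D_single: "pderiv_m i (Poly_Mapping.single m c) =
   Poly_Mapping.single (m - dl i) (of_nat (Poly_Mapping.lookup m i) * c)"
  by (simp add: pderiv_m_def)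

lemma single_expand: "u = (\<Sum>m\<in>Poly_Mapping.keys u. Poly_Mapping.single m (Poly_Mapping.lookup u m))"
proof (rule poly_mapping_eqI)
  fix k
  show "Poly_Mapping.lookup u k = Poly_Mapping.lookup (\<Sum>m\<in>Poly_Mapping.keys u. Poly_Mapping.single m (Poly_Mapping.lookup u m)) k"
    by (cases "k \<in> Poly_Mapping.keys u") (auto simp: lookup_sum lookup_single when_def in_keys_iff)
qed

lemma mono_shift:
  assumes "Poly_Mapping.lookup (a::nat\<Rightarrow>\<^sub>0nat) i > 0"
  shows "a - dl i + b = a + b - dl i"
  by (rule poly_mapping_eqI) (use assms in \<open>auto simp: lookup_add lookup_minus lookup_single when_def\<close>)

lemma D_mult_single:
  "pderiv_m i (Poly_Mapping.single a x * Poly_Mapping.single b y) =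
     pderiv_m i (Poly_Mapping.single a x) * Poly_Mapping.single b y
     + Poly_Mapping.single a x * pderiv_m i (Poly_Mapping.single b y)"
proof -
  have e1: "Poly_Mapping.single (a - dl i + b) (of_nat (Poly_Mapping.lookup a i) * x * y)
     = Poly_Mapping.single (a + b - dl i) (of_nat (Poly_Mapping.lookup a i) * x * y)"
    using mono_shift[of a i b] by (cases "Poly_Mapping.lookup a i > 0") auto
  have e2: "Poly_Mapping.single (a + (b - dl i)) (x * (of_nat (Poly_Mapping.lookup b i) * y))
     = Poly_Mapping.single (a + b - dl i) (of_nat (Poly_Mapping.lookup b i) * x * y)"
  proof (cases "Poly_Mapping.lookup b i > 0")
    case True
    then have "a + (b - dl i) = a + b - dl i" using mono_shift[of b i a] by (simp add: add.commute)
    then show ?thesis by (simp add: algebra_simps)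
  qed simp
  show ?thesis
    unfolding mult_single D_single e1 e2
    by (simp add: lookup_add single_add[symmetric] algebra_simps)
qed

lemma D_mult: "pderiv_m i (u * v) = pderiv_m i u * v + u * pderiv_m i v"
proof -
  let ?s = "\<lambda>w m. Poly_Mapping.single m (Poly_Mapping.lookup w m)"
  let ?A = "Poly_Mapping.keys u" and ?B = "Poly_Mapping.keys v"
  have "u * v = (\<Sum>a\<in>?A. \<Sum>b\<in>?B. ?s u a * ?s v b)"
    by (subst single_expand[of u], subst single_expand[of v]) (simp add: sum_product)
  hence "pderiv_m i (u*v) = (\<Sum>a\<in>?A. \<Sum>b\<in>?B. pderiv_m i (?s u a) * ?s v b + ?s u a * pderiv_m i (?s v b))"
    by (simp add: D_sum D_mult_single)
  also have "\<dots> = (\<Sum>a\<in>?A. pderiv_m i (?s u a)) * (\<Sum>b\<in>?B. ?s v b) + (\<Sum>a\<in>?A. ?s u a) * (\<Sum>b\<in>?B. pderiv_m i (?s v b))"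
    by (simp add: sum.distrib sum_product)
  also have "\<dots> = pderiv_m i u * v + u * pderiv_m i v"
    by (simp add: D_sum[symmetric] single_expand[symmetric])
  finally show ?thesis .
qed

lemma mconst_simps: "mconst 0 = 0" "mconst 1 = 1" "mconst (x + y) = mconst x + mconst y"
  "mconst (x * y) = mconst x * mconst y" "mconst (- x) = - mconst x" "mconst (x - y) = mconst x - mconst y"
  by (simp_all add: mconst_def single_add mult_single single_uminus single_diff)

lemma mconst_sum: "mconst (sum f S) = (\<Sum>s\<in>S. mconst (f s))"
  by (induction S rule: infinite_finite_induct) (auto simp: mconst_simps)

lemma D_mconst [simp]: "pderiv_m i (mconst c) = 0"
  by (simp add: mconst_def D_single)

lemma D_mvar: "pderiv_m i (mvar j) = (if i = j then 1 else 0)"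
  by (simp add: mvar_def D_single lookup_single when_def)

lemma D_one [simp]: "pderiv_m i 1 = 0"
  using D_mconst[of i 1] by (simp add: mconst_simps)


definition qd :: "nat \<Rightarrow> (nat \<Rightarrow>\<^sub>0 nat) \<Rightarrow> nat" where
  "qd n m = (\<Sum>j\<in>{n<..2*n}. Poly_Mapping.lookup m j)"

definition qb :: "nat \<Rightarrow> nat \<Rightarrow> mpoly \<Rightarrow> bool" where
  "qb n d u = (\<forall>m\<in>Poly_Mapping.keys u. qd n m \<le> d)"

lemma qd_add: "qd n (a + b) = qd n a + qd n b"
  by (simp add: qd_def lookup_add sum.distrib)

lemma qd_dl: "qd n (dl i) = (if i \<in> {n<..2*n} then 1 else 0)"
  by (simp add: qd_def lookup_single when_def)

lemma keys_D: "Poly_Mapping.keys (pderiv_m i u) \<subseteq>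
   {m - dl i | m. m \<in> Poly_Mapping.keys u \<and> Poly_Mapping.lookup m i > 0}"
proof -
  have "Poly_Mapping.keys (pderiv_m i u) \<subseteq> (\<Union>m\<in>Poly_Mapping.keys u. Poly_Mapping.keys
     (Poly_Mapping.single (m - dl i) (of_nat (Poly_Mapping.lookup m i) * Poly_Mapping.lookup u m)))"
    unfolding pderiv_m_def by (rule keys_sum)
  also have "\<dots> \<subseteq> {m - dl i | m. m \<in> Poly_Mapping.keys u \<and> Poly_Mapping.lookup m i > 0}"
    by (auto split: if_splits)
  finally show ?thesis .
qed

lemma qd_minus:
  assumes "Poly_Mapping.lookup m i > 0"
  shows "qd n m = qd n (m - dl i) + (if i \<in> {n<..2*n} then 1 else 0)"
proof -
  have "m = (m - dl i) + dl i"
    by (rule poly_mapping_eqI) (use assms in \<open>auto simp: lookup_add lookup_minus lookup_single when_def\<close>)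
  hence "qd n m = qd n ((m - dl i) + dl i)" by simp
  thus ?thesis using qd_dl[of n i] by (simp add: qd_add)
qed

lemma qb_D: "qb n d u \<Longrightarrow> qb n d (pderiv_m i u)"
  unfolding qb_def using keys_D[of i u] qd_minus[of _ i n] by fastforce

lemma qb_Dq:
  assumes "qb n d u" "i \<in> {n<..2*n}"
  shows "qb n (d - 1) (pderiv_m i u) \<and> (d = 0 \<longrightarrow> pderiv_m i u = 0)"
proof -
  have "\<forall>m'\<in>Poly_Mapping.keys (pderiv_m i u). qd n m' + 1 \<le> d"
    using keys_D[of i u] qd_minus[of _ i n] assms unfolding qb_def by fastforce
  thus ?thesis unfolding qb_def by (metis keys_eq_empty all_not_in_conv le_diff_conv2 le_add2 add_le_same_cancel2 not_one_le_zero le_trans)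
qed

definition cq :: "nat \<Rightarrow> nat list \<Rightarrow> nat" where
  "cq n is = length (filter (\<lambda>i. i \<in> {n<..2*n}) is)"

lemma qb_pderivs:
  assumes "qb n d u"
  shows "qb n (d - cq n is) (pderivs is u) \<and> (cq n is > d \<longrightarrow> pderivs is u = 0)"
proof (induction "is")
  case Nil
  then show ?case using assms by (simp add: pderivs_def cq_def)
next
  case (Cons i "is")
  have pe: "pderivs (i # is) u = pderiv_m i (pderivs is u)" by (simp add: pderivs_def)
  show ?case
  proof (cases "i \<in> {n<..2*n}")
    case True
    hence c: "cq n (i # is) = Suc (cq n is)" by (simp add: cq_def)
    from qb_Dq[OF conjunct1[OF Cons] True]
    have h: "qb n (d - cq n is - 1) (pderiv_m i (pderivs is u)) \<and>
      (d - cq n is = 0 \<longrightarrow> pderiv_m i (pderivs is u) = 0)" .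
    show ?thesis using Cons h unfolding pe c by (auto simp: qb_def)
  next
    case False
    hence c: "cq n (i # is) = cq n is" by (simp add: cq_def)
    show ?thesis using Cons qb_D unfolding pe c by auto
  qed
qed

lemma cq_compl:
  "length is = length js \<Longrightarrow> (\<forall>k<length is. (is!k \<in> {n<..2*n}) \<longleftrightarrow> (js!k \<notin> {n<..2*n}))
   \<Longrightarrow> cq n is + cq n js = length is"
proof (induction "is" arbitrary: js)
  case Nil thus ?case by (simp add: cq_def)
next
  case (Cons i "is")
  then obtain j js' where js: "js = j # js'" by (cases js) auto
  have "\<forall>k<length is. (is!k \<in> {n<..2*n}) \<longleftrightarrow> (js'!k \<notin> {n<..2*n})"
    using Cons(3) js by (metis Suc_less_eq length_Cons nth_Cons_Suc)
  hence ih: "cq n is + cq n js' = length is" using Cons js by simp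
  have "(i \<in> {n<..2*n}) \<longleftrightarrow> (j \<notin> {n<..2*n})" using Cons(3) js by (metis length_Cons nth_Cons_0 zero_less_Suc)
  thus ?case using ih js by (auto simp: cq_def)
qed

lemma Lam_nz: "Lam n i j \<noteq> 0 \<Longrightarrow> (i \<in> {n<..2*n}) \<longleftrightarrow> (j \<notin> {n<..2*n})"
  by (auto simp: Lam_def split: if_splits)

lemma Pl_vanish:
  assumes u: "qb n 1 u" and v: "qb n 1 v" and l: "l \<ge> 3"
  shows "Pl n l u v = 0"
  unfolding Pl_def
proof (intro sum.neutral ballI)
  fix "is" js assume is_in: "is \<in> idx_lists n l" and js_in: "js \<in> idx_lists n l"
  show "mconst (\<Prod>k<l. Lam n (is ! k) (js ! k)) * pderivs is u * pderivs js v = 0"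
  proof (cases "(\<Prod>k<l. Lam n (is ! k) (js ! k)) = 0")
    case True thus ?thesis by (simp only: True mconst_simps) simp
  next
    case False
    hence "\<forall>k<l. Lam n (is ! k) (js ! k) \<noteq> 0" by auto
    hence "cq n is + cq n js = l"
      using is_in js_in Lam_nz by (intro trans[OF cq_compl]) (auto simp: idx_lists_def)
    hence "cq n is > 1 \<or> cq n js > 1" using l by linarith
    thus ?thesis using qb_pderivs[OF u, of "is"] qb_pderivs[OF v, of js] by auto
  qed
qed

definition PB :: "nat \<Rightarrow> mpoly \<Rightarrow> mpoly \<Rightarrow> mpoly" where
  "PB n u v = (\<Sum>i\<in>{1..2*n}. \<Sum>j\<in>{1..2*n}. mconst (Lam n i j) * pderiv_m i u * pderiv_m j v)"

lemma Pl1: "Pl n 1 u v = PB n u v"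
proof -
  have il: "idx_lists n 1 = (\<lambda>i. [i]) ` {1..2*n}"
    by (auto simp: idx_lists_def length_Suc_conv)
  have inj: "inj_on (\<lambda>i. [i]) {1..2*n}" by (auto simp: inj_on_def)
  show ?thesis unfolding Pl_def PB_def il sum.reindex[OF inj]
    by (simp add: pderivs_def)
qed

lemma star_PB:
  assumes "qb n 1 u" "qb n 1 v"
  shows "star_bracket n u v = PB n u v"
proof -
  have "star_bracket n u v = (\<Sum>l\<in>{0}. mconst ((-1/4) ^ l / of_nat (fact (2*l+1))) * Pl n (2*l+1) u v)"
    unfolding star_bracket_def
  proof (rule Sum_any.expand_superset)
    show "{l. mconst ((-1/4) ^ l / of_nat (fact (2*l+1))) * Pl n (2*l+1) u v \<noteq> 0} \<subseteq> {0}"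
    proof
      fix l assume "l \<in> {l. mconst ((-1/4) ^ l / of_nat (fact (2*l+1))) * Pl n (2*l+1) u v \<noteq> 0}"
      hence "Pl n (2*l+1) u v \<noteq> 0" by auto
      hence "\<not> 2*l+1 \<ge> 3" using Pl_vanish[OF assms] by blast
      thus "l \<in> {0}" by simp
    qed
  qed simp
  thus ?thesis using Pl1[of n u v] by (simp add: mconst_simps)
qed


lemma Lam_swap: "Lam n j i = - Lam n i j"
  by (auto simp: Lam_def)

lemma PB_antisym: "PB n u v = - PB n v u"
proof -
  have "PB n v u = (\<Sum>i\<in>{1..2*n}. \<Sum>j\<in>{1..2*n}. mconst (Lam n j i) * pderiv_m j v * pderiv_m i u)"
    unfolding PB_def by (rule sum.swap)
  also have "\<dots> = (\<Sum>i\<in>{1..2*n}. \<Sum>j\<in>{1..2*n}. - (mconst (Lam n i j) * pderiv_m i u * pderiv_m j v))"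
    by (intro sum.cong refl) (subst Lam_swap, simp add: mconst_simps)
  also have "\<dots> = - PB n u v"
    unfolding PB_def by (simp add: sum_negf)
  finally show ?thesis by simp
qed

lemma PB_add_left: "PB n (u + w) v = PB n u v + PB n w v"
  by (simp add: PB_def D_add algebra_simps sum.distrib)

lemma PB_zero_left [simp]: "PB n 0 v = 0"
  by (simp add: PB_def)

lemma PB_sum_left: "PB n (sum f S) v = (\<Sum>s\<in>S. PB n (f s) v)"
  by (induction S rule: infinite_finite_induct) (auto simp: PB_add_left)

lemma PB_mult_left: "PB n (f * g) h = f * PB n g h + g * PB n f h"
  by (simp add: PB_def D_mult algebra_simps sum.distrib sum_distrib_left)

lemma PB_mconst_left [simp]: "PB n (mconst c) h = 0"
  by (simp add: PB_def)

lemma PB_one_left [simp]: "PB n 1 h = 0"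
  using PB_mconst_left[of n 1 h] by (simp add: mconst_simps)

lemma PB_smult_left: "PB n (mconst c * u) v = mconst c * PB n u v"
  by (simp add: PB_mult_left)

lemma PB_uminus_left: "PB n (- u) v = - PB n u v"
  using PB_add_left[of n u "-u" v] by (simp add: eq_neg_iff_add_eq_0 add.commute)

lemma PB_diff_left: "PB n (u - w) v = PB n u v - PB n w v"
  using PB_add_left[of n u "-w" v] by (simp add: PB_uminus_left)

lemma PB_add_right: "PB n v (u + w) = PB n v u + PB n v w"
  by (subst (1 2 3) PB_antisym) (simp add: PB_add_left)
lemma PB_zero_right [simp]: "PB n v 0 = 0"
  by (simp add: PB_def)
lemma PB_sum_right: "PB n v (sum f S) = (\<Sum>s\<in>S. PB n v (f s))"
  by (induction S rule: infinite_finite_induct) (auto simp: PB_add_right)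
lemma PB_mult_right: "PB n h (f * g) = f * PB n h g + g * PB n h f"
  by (subst (1 2 3) PB_antisym) (simp add: PB_mult_left)
lemma PB_smult_right: "PB n v (mconst c * u) = mconst c * PB n v u"
  by (subst (1 2) PB_antisym) (simp add: PB_smult_left)
lemma PB_mconst_right [simp]: "PB n h (mconst c) = 0"
  by (subst PB_antisym) simp
lemma PB_one_right [simp]: "PB n h 1 = 0"
  by (subst PB_antisym) simp
lemma PB_uminus_right: "PB n v (- u) = - PB n v u"
  by (subst (1 2) PB_antisym) (simp add: PB_uminus_left)

lemma Lam_p: "1 \<le> k \<Longrightarrow> k \<le> n \<Longrightarrow> Lam n k j = (if j = n + k then 1 else 0)"
  by (auto simp: Lam_def)
lemma Lam_q: "1 \<le> k \<Longrightarrow> k \<le> n \<Longrightarrow> Lam n (n + k) j = (if j = k then -1 else 0)"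
  by (auto simp: Lam_def)

lemma PB_pvar_left:
  assumes "1 \<le> k" "k \<le> n"
  shows "PB n (pvar k) f = pderiv_m (n + k) f"
proof -
  have "PB n (pvar k) f = (\<Sum>i\<in>{1..2*n}. if i = k then (\<Sum>j\<in>{1..2*n}. mconst (Lam n k j) * pderiv_m j f) else 0)"
    unfolding PB_def pvar_def by (intro sum.cong refl) (auto simp: D_mvar sum_distrib_left)
  also have "\<dots> = (\<Sum>j\<in>{1..2*n}. mconst (Lam n k j) * pderiv_m j f)"
    using assms by simp
  also have "\<dots> = (\<Sum>j\<in>{1..2*n}. if j = n + k then pderiv_m j f else 0)"
    using assms by (intro sum.cong refl) (simp add: Lam_p mconst_simps)
  also have "\<dots> = pderiv_m (n + k) f" using assms by simp
  finally show ?thesis .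
qed

lemma PB_qvar_left:
  assumes "1 \<le> k" "k \<le> n"
  shows "PB n (qvar n k) f = - pderiv_m k f"
proof -
  have "PB n (qvar n k) f = (\<Sum>i\<in>{1..2*n}. if i = n + k then (\<Sum>j\<in>{1..2*n}. mconst (Lam n (n+k) j) * pderiv_m j f) else 0)"
    unfolding PB_def qvar_def by (intro sum.cong refl) (auto simp: D_mvar sum_distrib_left)
  also have "\<dots> = (\<Sum>j\<in>{1..2*n}. mconst (Lam n (n+k) j) * pderiv_m j f)"
    using assms by simp
  also have "\<dots> = (\<Sum>j\<in>{1..2*n}. if j = k then - pderiv_m j f else 0)"
    using assms by (intro sum.cong refl) (simp add: Lam_q mconst_simps)
  also have "\<dots> = - pderiv_m k f" using assms by simp
  finally show ?thesis .
qed


definition Ssum :: "nat \<Rightarrow> mpoly" where "Ssum n = (\<Sum>k=1..n. pvar k * qvar n k)"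
definition V :: "nat \<Rightarrow> mpoly" where "V b = (if b = 1 then 1 else pvar (b - 1))"
definition W :: "nat \<Rightarrow> nat \<Rightarrow> mpoly" where "W n a = (if a = 1 then - Ssum n else qvar n (a - 1))"

lemma Psi_VW: "Psi n i j = V i * W n j"
  by (simp add: Psi_def Psi_row1_def V_def W_def Ssum_def)

lemma D_pvar: "pderiv_m i (pvar k) = (if i = k then 1 else 0)"
  by (simp add: pvar_def D_mvar)
lemma D_qvar: "pderiv_m i (qvar n k) = (if i = n + k then 1 else 0)"
  by (simp add: qvar_def D_mvar)

lemma D_S_p: assumes "1 \<le> k" "k \<le> n" shows "pderiv_m k (Ssum n) = qvar n k"
proof -
  have "pderiv_m k (Ssum n) = (\<Sum>j=1..n. if j = k then qvar n j else 0)"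
    unfolding Ssum_def D_sum using assms by (intro sum.cong refl) (auto simp: D_mult D_pvar D_qvar)
  thus ?thesis using assms by simp
qed

lemma D_S_q: assumes "1 \<le> k" "k \<le> n" shows "pderiv_m (n + k) (Ssum n) = pvar k"
proof -
  have "pderiv_m (n+k) (Ssum n) = (\<Sum>j=1..n. if j = k then pvar j else 0)"
    unfolding Ssum_def D_sum using assms by (intro sum.cong refl) (auto simp: D_mult D_pvar D_qvar)
  thus ?thesis using assms by simp
qed

lemma selfneg: "(x::mpoly) = - x \<Longrightarrow> x = 0"
proof (rule poly_mapping_eqI)
  fix k assume "x = - x"
  hence "Poly_Mapping.lookup x k = - Poly_Mapping.lookup x k" by (metis lookup_uminus)
  thus "Poly_Mapping.lookup x k = Poly_Mapping.lookup 0 k" by simp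
qed

lemma PB_self: "PB n u u = 0"
  using PB_antisym[of n u u] selfneg by blast

lemma PB_VV: assumes "1 \<le> a" "a \<le> n+1" "1 \<le> b" "b \<le> n+1" shows "PB n (V a) (V b) = 0"
  using assms by (auto simp: V_def PB_pvar_left D_pvar)

lemma PB_VW: assumes "1 \<le> a" "a \<le> n+1" "1 \<le> b" "b \<le> n+1"
  shows "PB n (V a) (W n b) = (if a = b then 1 else 0) - (if b = 1 then V a else 0)"
proof (cases "a = 1")
  case True thus ?thesis by (simp add: V_def)
next
  case False
  have a1: "1 \<le> a - 1" "a - 1 \<le> n" using False assms by auto
  have pa: "PB n (V a) f = pderiv_m (n + (a - 1)) f" for f
    using False PB_pvar_left[OF a1] by (simp add: V_def)
  show ?thesis
  proof (cases "b = 1")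
    case True
    have "PB n (V a) (W n b) = pderiv_m (n + (a - 1)) (- Ssum n)" by (simp add: pa W_def True)
    also have "\<dots> = - pvar (a - 1)" using D_S_q[OF a1] by (simp add: D_uminus)
    finally show ?thesis using False True by (simp add: V_def)
  next
    case b: False
    thus ?thesis using False assms by (auto simp add: pa W_def D_qvar)
  qed
qed

lemma PB_WV: assumes "1 \<le> a" "a \<le> n+1" "1 \<le> b" "b \<le> n+1"
  shows "PB n (W n b) (V a) = (if b = 1 then V a else 0) - (if a = b then 1 else 0)"
  using PB_antisym[of n "W n b" "V a"] PB_VW[OF assms] by simp

lemma PB_WW: assumes "1 \<le> a" "a \<le> n+1" "1 \<le> b" "b \<le> n+1"
  shows "PB n (W n a) (W n b) = (if b = 1 then W n a else 0) - (if a = 1 then W n b else 0)"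
proof -
  have qa: "PB n (W n a) f = - pderiv_m (a - 1) f" if "a \<noteq> 1" "1 \<le> a" "a \<le> n+1" for a f
    using that PB_qvar_left[of "a-1" n f] by (simp add: W_def)
  have w1: "PB n (W n a) (W n 1) = W n a" if "a \<noteq> 1" "1 \<le> a" "a \<le> n+1" for a
    using that qa[OF that] D_S_p[of "a-1" n] by (simp add: W_def D_uminus)
  show ?thesis
  proof (cases "a = 1")
    case True
    show ?thesis
    proof (cases "b = 1")
      case True thus ?thesis using \<open>a = 1\<close> by (simp add: PB_self)
    next
      case False
      thus ?thesis using \<open>a = 1\<close> PB_antisym[of n "W n 1" "W n b"] w1[of b] assms by simp
    qed
  next
    case False
    show ?thesis
    proof (cases "b = 1")
      case True thus ?thesis using False w1[of a] assms by simp
    next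
      case b: False
      thus ?thesis using False qa[OF False assms(1,2)] assms by (auto simp add: W_def D_qvar)
    qed
  qed
qed


lemma PB_WVWV: assumes "a \<in> {1..n+1}" "b \<in> {1..n+1}" "c \<in> {1..n+1}" "d \<in> {1..n+1}"
  shows "PB n (W n a * V b) (W n c * V d) = (if b = c then W n a * V d else 0) - (if a = d then W n c * V b else 0)"
  using assms by (simp add: PB_mult_left PB_mult_right PB_VV PB_VW PB_WV PB_WW) (auto simp: algebra_simps)

lemma PB_WVV: assumes "a \<in> {1..n+1}" "b \<in> {1..n+1}" "d \<in> {1..n+1}"
  shows "PB n (W n a * V b) (V d) = (if a = 1 then V b * V d else 0) - (if d = a then V b else 0)"
  using assms by (simp add: PB_mult_left PB_VV PB_WV) (auto simp: algebra_simps)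

lemma PB_VWV: assumes "b \<in> {1..n+1}" "c \<in> {1..n+1}" "d \<in> {1..n+1}"
  shows "PB n (V b) (W n c * V d) = (if b = c then V d else 0) - (if c = 1 then V d * V b else 0)"
  using assms by (simp add: PB_mult_right PB_VV PB_VW) (auto simp: algebra_simps)

definition psi :: "nat \<Rightarrow> cmat \<Rightarrow> mpoly" where
  "psi n X = (\<Sum>b=1..n+1. mconst (X 1 b) * V b)"

lemma tilde_eq: "tilde n X = (\<Sum>i=1..n+1. \<Sum>j=1..n+1. mconst (X j i) * (W n j * V i))"
  unfolding tilde_def Psi_VW by (simp add: mult_ac)

lemma triple_rev: "(\<Sum>a\<in>R. \<Sum>b\<in>R. \<Sum>c\<in>R. f a b c) = (\<Sum>c\<in>R. \<Sum>b\<in>R. \<Sum>a\<in>R. f a b c)"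
proof -
  have "(\<Sum>a\<in>R. \<Sum>b\<in>R. \<Sum>c\<in>R. f a b c) = (\<Sum>a\<in>R. \<Sum>c\<in>R. \<Sum>b\<in>R. f a b c)"
    by (intro sum.cong refl sum.swap)
  also have "\<dots> = (\<Sum>c\<in>R. \<Sum>a\<in>R. \<Sum>b\<in>R. f a b c)" by (rule sum.swap)
  also have "\<dots> = (\<Sum>c\<in>R. \<Sum>b\<in>R. \<Sum>a\<in>R. f a b c)" by (intro sum.cong refl sum.swap)
  finally show ?thesis .
qed

lemma PB_expand:
  "PB n (\<Sum>i\<in>I. \<Sum>j\<in>J. mconst (x i j) * f i j) (\<Sum>k\<in>K. \<Sum>l\<in>L. mconst (y k l) * g k l)
   = (\<Sum>i\<in>I. \<Sum>j\<in>J. \<Sum>k\<in>K. \<Sum>l\<in>L. mconst (x i j * y k l) * PB n (f i j) (g k l))"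
proof -
  have "PB n (\<Sum>i\<in>I. \<Sum>j\<in>J. mconst (x i j) * f i j) (\<Sum>k\<in>K. \<Sum>l\<in>L. mconst (y k l) * g k l)
    = (\<Sum>i\<in>I. \<Sum>j\<in>J. mconst (x i j) * PB n (f i j) (\<Sum>k\<in>K. \<Sum>l\<in>L. mconst (y k l) * g k l))"
    by (simp add: PB_sum_left PB_smult_left)
  also have "\<dots> = (\<Sum>i\<in>I. \<Sum>j\<in>J. mconst (x i j) * (\<Sum>k\<in>K. \<Sum>l\<in>L. mconst (y k l) * PB n (f i j) (g k l)))"
    by (simp add: PB_sum_right PB_smult_right)
  also have "\<dots> = (\<Sum>i\<in>I. \<Sum>j\<in>J. \<Sum>k\<in>K. \<Sum>l\<in>L. mconst (x i j * y k l) * PB n (f i j) (g k l))"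
    by (simp add: sum_distrib_left mconst_simps mult.assoc)
  finally show ?thesis .
qed

lemma PB_tilde: "PB n (tilde n X) (tilde n Y) = tilde n (commutator n X Y)"
proof -
  define R where "R = {1..n+1}"
  have te: "tilde n Z = (\<Sum>i\<in>R. \<Sum>j\<in>R. mconst (Z j i) * (W n j * V i))" for Z
    unfolding tilde_eq R_def ..
  have mm: "mat_mult n Z Z' = (\<lambda>i j. \<Sum>k\<in>R. Z i k * Z' k j)" for Z Z'
    unfolding mat_mult_def R_def ..
  have "PB n (tilde n X) (tilde n Y) = (\<Sum>i\<in>R. \<Sum>j\<in>R. \<Sum>k\<in>R. \<Sum>l\<in>R.
      mconst (X j i * Y l k) * PB n (W n j * V i) (W n l * V k))"
    unfolding te by (rule PB_expand)
  also have "\<dots> = (\<Sum>i\<in>R. \<Sum>j\<in>R. \<Sum>k\<in>R. \<Sum>l\<in>R.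
      (if i = l then mconst (X j i * Y l k) * (W n j * V k) else 0)
      - (if j = k then mconst (X j i * Y l k) * (W n l * V i) else 0))"
    by (intro sum.cong refl) (simp add: PB_WVWV R_def right_diff_distrib)
  also have "\<dots> = (\<Sum>i\<in>R. \<Sum>j\<in>R. \<Sum>k\<in>R. mconst (X j i * Y i k) * (W n j * V k))
      - (\<Sum>i\<in>R. \<Sum>j\<in>R. \<Sum>l\<in>R. mconst (X j i * Y l j) * (W n l * V i))"
  proof -
    have fin: "finite R" by (simp add: R_def)
    have e2: "(\<Sum>k\<in>R. \<Sum>l\<in>R. (if j = k then g k l else 0)) = (\<Sum>l\<in>R. g j l)" if "j \<in> R" for j and g :: "nat \<Rightarrow> nat \<Rightarrow> mpoly"
    proof -
      have "(\<Sum>k\<in>R. \<Sum>l\<in>R. (if j = k then g k l else 0)) = (\<Sum>k\<in>R. if j = k then (\<Sum>l\<in>R. g k l) else 0)"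
        by (rule sum.cong) auto
      also have "\<dots> = (\<Sum>l\<in>R. g j l)" using that fin by simp
      finally show ?thesis .
    qed
    show ?thesis
      by (simp add: sum_subtractf e2 fin)
  qed
  also have "\<dots> = (\<Sum>k\<in>R. \<Sum>j\<in>R. mconst (mat_mult n X Y j k) * (W n j * V k))
      - (\<Sum>i\<in>R. \<Sum>l\<in>R. mconst (mat_mult n Y X l i) * (W n l * V i))"
  proof -
    have a: "(\<Sum>i\<in>R. \<Sum>j\<in>R. \<Sum>k\<in>R. mconst (X j i * Y i k) * (W n j * V k))
      = (\<Sum>k\<in>R. \<Sum>j\<in>R. mconst (mat_mult n X Y j k) * (W n j * V k))"
      by (subst triple_rev) (simp add: mm mconst_sum sum_distrib_right)
    have b: "(\<Sum>i\<in>R. \<Sum>j\<in>R. \<Sum>l\<in>R. mconst (X j i * Y l j) * (W n l * V i))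
      = (\<Sum>i\<in>R. \<Sum>l\<in>R. mconst (mat_mult n Y X l i) * (W n l * V i))"
    proof -
      have "(\<Sum>i\<in>R. \<Sum>j\<in>R. \<Sum>l\<in>R. mconst (X j i * Y l j) * (W n l * V i))
        = (\<Sum>i\<in>R. \<Sum>l\<in>R. \<Sum>j\<in>R. mconst (X j i * Y l j) * (W n l * V i))"
        by (rule sum.cong[OF refl], rule sum.swap)
      also have "\<dots> = (\<Sum>i\<in>R. \<Sum>l\<in>R. mconst (mat_mult n Y X l i) * (W n l * V i))"
        by (simp add: mm mconst_sum sum_distrib_right sum_distrib_left mult.commute)
      finally show ?thesis .
    qed
    show ?thesis using a b by simp
  qed
  also have "\<dots> = tilde n (commutator n X Y)"
    unfolding te commutator_def by (simp add: mconst_simps left_diff_distrib sum_subtractf)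
  finally show ?thesis .
qed


lemma PB_expand21:
  "PB n (\<Sum>i\<in>I. \<Sum>j\<in>J. mconst (x i j) * f i j) (\<Sum>k\<in>K. mconst (y k) * g k)
   = (\<Sum>i\<in>I. \<Sum>j\<in>J. \<Sum>k\<in>K. mconst (x i j * y k) * PB n (f i j) (g k))"
proof -
  have "PB n (\<Sum>i\<in>I. \<Sum>j\<in>J. mconst (x i j) * f i j) (\<Sum>k\<in>K. mconst (y k) * g k)
    = (\<Sum>i\<in>I. \<Sum>j\<in>J. mconst (x i j) * PB n (f i j) (\<Sum>k\<in>K. mconst (y k) * g k))"
    by (simp add: PB_sum_left PB_smult_left)
  also have "\<dots> = (\<Sum>i\<in>I. \<Sum>j\<in>J. mconst (x i j) * (\<Sum>k\<in>K. mconst (y k) * PB n (f i j) (g k)))"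
    by (simp add: PB_sum_right PB_smult_right)
  also have "\<dots> = (\<Sum>i\<in>I. \<Sum>j\<in>J. \<Sum>k\<in>K. mconst (x i j * y k) * PB n (f i j) (g k))"
    by (simp add: sum_distrib_left mconst_simps mult.assoc)
  finally show ?thesis .
qed

lemma PB_expand12:
  "PB n (\<Sum>i\<in>I. mconst (x i) * f i) (\<Sum>k\<in>K. \<Sum>l\<in>L. mconst (y k l) * g k l)
   = (\<Sum>i\<in>I. \<Sum>k\<in>K. \<Sum>l\<in>L. mconst (x i * y k l) * PB n (f i) (g k l))"
proof -
  have "PB n (\<Sum>i\<in>I. mconst (x i) * f i) (\<Sum>k\<in>K. \<Sum>l\<in>L. mconst (y k l) * g k l)
    = (\<Sum>i\<in>I. mconst (x i) * PB n (f i) (\<Sum>k\<in>K. \<Sum>l\<in>L. mconst (y k l) * g k l))"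
    by (simp add: PB_sum_left PB_smult_left)
  also have "\<dots> = (\<Sum>i\<in>I. mconst (x i) * (\<Sum>k\<in>K. \<Sum>l\<in>L. mconst (y k l) * PB n (f i) (g k l)))"
    by (simp add: PB_sum_right PB_smult_right)
  also have "\<dots> = (\<Sum>i\<in>I. \<Sum>k\<in>K. \<Sum>l\<in>L. mconst (x i * y k l) * PB n (f i) (g k l))"
    by (simp add: sum_distrib_left mconst_simps mult.assoc)
  finally show ?thesis .
qed

lemma PB_expand11:
  "PB n (\<Sum>i\<in>I. mconst (x i) * f i) (\<Sum>k\<in>K. mconst (y k) * g k)
   = (\<Sum>i\<in>I. \<Sum>k\<in>K. mconst (x i * y k) * PB n (f i) (g k))"
proof -
  have "PB n (\<Sum>i\<in>I. mconst (x i) * f i) (\<Sum>k\<in>K. mconst (y k) * g k)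
    = (\<Sum>i\<in>I. mconst (x i) * PB n (f i) (\<Sum>k\<in>K. mconst (y k) * g k))"
    by (simp add: PB_sum_left PB_smult_left)
  also have "\<dots> = (\<Sum>i\<in>I. mconst (x i) * (\<Sum>k\<in>K. mconst (y k) * PB n (f i) (g k)))"
    by (simp add: PB_sum_right PB_smult_right)
  also have "\<dots> = (\<Sum>i\<in>I. \<Sum>k\<in>K. mconst (x i * y k) * PB n (f i) (g k))"
    by (simp add: sum_distrib_left mconst_simps mult.assoc)
  finally show ?thesis .
qed

lemma delta2:
  assumes "finite R" "j \<in> R"
  shows "(\<Sum>k\<in>R. \<Sum>l\<in>R. (if k = j then g k l else 0)) = (\<Sum>l\<in>R. g j l)"
proof -
  have "(\<Sum>k\<in>R. \<Sum>l\<in>R. (if k = j then g k l else 0)) = (\<Sum>k\<in>R. if k = j then (\<Sum>l\<in>R. g k l) else 0)"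
    by (rule sum.cong) auto
  also have "\<dots> = (\<Sum>l\<in>R. g j l)" using assms by simp
  finally show ?thesis .
qed

lemma PB_psi_psi: "PB n (psi n X) (psi n Y) = 0"
  unfolding psi_def PB_expand11 by (intro sum.neutral ballI) (simp add: PB_VV)

lemma PB_tilde_psi: "PB n (tilde n X) (psi n Y) + PB n (psi n X) (tilde n Y) = psi n (commutator n X Y)"
proof -
  define R where "R = {1..n+1}"
  have fin: "finite R" and one: "1 \<in> R" by (auto simp: R_def)
  have te: "tilde n Z = (\<Sum>i\<in>R. \<Sum>j\<in>R. mconst (Z j i) * (W n j * V i))" for Z
    unfolding tilde_eq R_def ..
  have pe: "psi n Z = (\<Sum>b\<in>R. mconst (Z 1 b) * V b)" for Z
    unfolding psi_def R_def ..
  have mm: "mat_mult n Z Z' = (\<lambda>i j. \<Sum>k\<in>R. Z i k * Z' k j)" for Z Z'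
    unfolding mat_mult_def R_def ..
  have "PB n (tilde n X) (psi n Y) = (\<Sum>i\<in>R. \<Sum>j\<in>R. \<Sum>d\<in>R.
      (if j = 1 then mconst (X j i * Y 1 d) * (V i * V d) else 0) - (if d = j then mconst (X j i * Y 1 d) * V i else 0))"
    unfolding te pe PB_expand21 by (intro sum.cong refl) (simp add: PB_WVV R_def right_diff_distrib)
  also have "\<dots> = (\<Sum>i\<in>R. \<Sum>d\<in>R. mconst (X 1 i * Y 1 d) * (V i * V d))
      - (\<Sum>i\<in>R. \<Sum>j\<in>R. mconst (X j i * Y 1 j) * V i)"
  proof -
    have "(\<Sum>j\<in>R. \<Sum>d\<in>R. (if j = 1 then mconst (X j i * Y 1 d) * (V i * V d) else 0))
       = (\<Sum>d\<in>R. mconst (X 1 i * Y 1 d) * (V i * V d))" for i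
      by (rule delta2[OF fin one, of "\<lambda>j d. mconst (X j i * Y 1 d) * (V i * V d)"])
    thus ?thesis by (simp only: sum_subtractf) (simp add: fin)
  qed
  finally have P1: "PB n (tilde n X) (psi n Y) = \<dots>" .
  have "PB n (psi n X) (tilde n Y) = (\<Sum>b\<in>R. \<Sum>k\<in>R. \<Sum>l\<in>R.
      (if b = l then mconst (X 1 b * Y l k) * V k else 0) - (if l = 1 then mconst (X 1 b * Y l k) * (V k * V b) else 0))"
    unfolding te pe PB_expand12 by (intro sum.cong refl) (simp add: PB_VWV R_def right_diff_distrib)
  also have "\<dots> = (\<Sum>b\<in>R. \<Sum>k\<in>R. mconst (X 1 b * Y b k) * V k)
      - (\<Sum>b\<in>R. \<Sum>k\<in>R. mconst (X 1 b * Y 1 k) * (V k * V b))"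
    using one by (simp add: sum_subtractf fin)
  finally have P2: "PB n (psi n X) (tilde n Y) = \<dots>" .
  have c1: "(\<Sum>b\<in>R. \<Sum>k\<in>R. mconst (X 1 b * Y 1 k) * (V k * V b)) = (\<Sum>i\<in>R. \<Sum>d\<in>R. mconst (X 1 i * Y 1 d) * (V i * V d))"
    by (simp add: mult.commute)
  have c2: "(\<Sum>b\<in>R. \<Sum>k\<in>R. mconst (X 1 b * Y b k) * V k) = (\<Sum>k\<in>R. mconst (mat_mult n X Y 1 k) * V k)"
    by (subst sum.swap) (simp add: mm mconst_sum sum_distrib_right)
  have c3: "(\<Sum>i\<in>R. \<Sum>j\<in>R. mconst (X j i * Y 1 j) * V i) = (\<Sum>i\<in>R. mconst (mat_mult n Y X 1 i) * V i)"
    by (simp add: mm mconst_sum sum_distrib_right sum_distrib_left mult.commute)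
  show ?thesis
    unfolding P1 P2 c1 c2 c3 unfolding pe commutator_def
    by (simp add: mconst_simps left_diff_distrib sum_subtractf)
qed


lemma qb_zero [simp]: "qb n d 0" by (simp add: qb_def)
lemma qb_add: "qb n d u \<Longrightarrow> qb n d v \<Longrightarrow> qb n d (u + v)"
  unfolding qb_def using keys_add[of u v] by blast
lemma qb_uminus: "qb n d u \<Longrightarrow> qb n d (- u)"
  unfolding qb_def by simp
lemma qb_diff: "qb n d u \<Longrightarrow> qb n d v \<Longrightarrow> qb n d (u - v)"
  unfolding qb_def using keys_diff[of u v] by blast
lemma qb_sum: "(\<And>s. s \<in> S \<Longrightarrow> qb n d (f s)) \<Longrightarrow> qb n d (sum f S)"
  unfolding qb_def using keys_sum[of f S] by blast
lemma qb_mult: "qb n d1 u \<Longrightarrow> qb n d2 v \<Longrightarrow> qb n (d1 + d2) (u * v)"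
  unfolding qb_def using keys_mult[of u v] by (fastforce simp: qd_add intro: add_mono)
lemma qb_mono: "qb n d u \<Longrightarrow> d \<le> d' \<Longrightarrow> qb n d' u"
  unfolding qb_def by force
lemma qb_mconst: "qb n 0 (mconst c)"
  by (simp add: qb_def mconst_def qd_def)
lemma qb_mvar: "qb n 1 (mvar i)"
  using qd_dl[of n i] by (simp add: qb_def mvar_def)
lemma qb_pvar: "k \<le> n \<Longrightarrow> qb n 0 (pvar k)"
  using qd_dl[of n k] by (simp add: qb_def mvar_def pvar_def)
lemma qb_V: "b \<le> n + 1 \<Longrightarrow> qb n 0 (V b)"
  using qb_mconst[of n 1] by (simp add: V_def qb_pvar mconst_simps)
lemma qb_W: "qb n 1 (W n a)"
proof -
  have "qb n 1 (Ssum n)" unfolding Ssum_def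
    by (rule qb_sum) (use qb_mult[OF qb_pvar qb_mvar] in \<open>auto simp: qvar_def\<close>)
  thus ?thesis using qb_mvar[of n] by (simp add: W_def qb_uminus qvar_def)
qed
lemma qb_tilde: "qb n 1 (tilde n X)"
  unfolding tilde_eq
  by (intro qb_sum) (use qb_mult[OF qb_mconst qb_mult[OF qb_W qb_V]] in auto)
lemma qb_psi: "qb n 1 (psi n X)"
  unfolding psi_def
  by (intro qb_sum) (use qb_mult[OF qb_mconst qb_V] qb_mono in fastforce)
lemma qb_smult: "qb n 1 u \<Longrightarrow> qb n 1 (mconst c * u)"
  using qb_mult[OF qb_mconst] by fastforce


lemma sl_sum: "(\<And>x. x \<in> S \<Longrightarrow> f x \<in> sl n) \<Longrightarrow> (\<lambda>i j. \<Sum>x\<in>S. f x i j) \<in> sl n"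
proof -
  assume h: "\<And>x. x \<in> S \<Longrightarrow> f x \<in> sl n"
  have "(\<Sum>i=1..n+1. \<Sum>x\<in>S. f x i i) = (\<Sum>x\<in>S. \<Sum>i=1..n+1. f x i i)" by (rule sum.swap)
  also have "\<dots> = 0" using h by (simp add: sl_def)
  finally show ?thesis using h by (auto simp: sl_def)
qed

lemma Emat_sl: "a \<in> {1..n+1} \<Longrightarrow> b \<in> {1..n+1} \<Longrightarrow> a \<noteq> b \<Longrightarrow> Emat a b \<in> sl n"
proof -
  assume h: "a \<in> {1..n+1}" "b \<in> {1..n+1}" "a \<noteq> b"
  have "(\<Sum>i=1..n+1. Emat a b i i) = 0"
    by (rule sum.neutral) (use h in \<open>auto simp: Emat_def\<close>)
  thus ?thesis using h unfolding sl_def by (auto simp: Emat_def)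
qed

lemma H_sl: "1 \<le> k \<Longrightarrow> k \<le> n \<Longrightarrow> (\<lambda>i j. Emat k k i j - Emat (k+1) (k+1) i j) \<in> sl n"
proof -
  assume k: "1 \<le> k" "k \<le> n"
  have "(\<Sum>i=1..n+1. Emat k k i i - Emat (k+1) (k+1) i i) = 0"
    using k by (simp add: Emat_def sum_subtractf)
  thus ?thesis using k by (auto simp: sl_def Emat_def)
qed

lemma smult_sl: "X \<in> sl n \<Longrightarrow> (\<lambda>i j. c * X i j) \<in> sl n"
proof -
  assume h: "X \<in> sl n"
  have "(\<Sum>i=1..n+1. c * X i i) = c * (\<Sum>i=1..n+1. X i i)" by (rule sum_distrib_left[symmetric])
  thus ?thesis using h unfolding sl_def by auto
qed

lemma phi1_psi:
  fixes n :: nat and \<phi>1 :: "cmat \<Rightarrow> mpoly"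
  assumes n: "n \<ge> 1"
    and lin_add: "\<And>X Y. X \<in> sl n \<Longrightarrow> Y \<in> sl n \<Longrightarrow> \<phi>1 (\<lambda>i j. X i j + Y i j) = \<phi>1 X + \<phi>1 Y"
    and lin_smult: "\<And>c X. X \<in> sl n \<Longrightarrow> \<phi>1 (\<lambda>i j. c * X i j) = mconst c * \<phi>1 X"
    and v1: "\<phi>1 (\<lambda>i j. Emat 1 1 i j - Emat 2 2 i j) = 1"
    and v2: "\<And>k. 2 \<le> k \<Longrightarrow> k \<le> n \<Longrightarrow> \<phi>1 (\<lambda>i j. Emat k k i j - Emat (k+1) (k+1) i j) = 0"
    and v3: "\<And>k. 1 \<le> k \<Longrightarrow> k \<le> n \<Longrightarrow> \<phi>1 (Emat 1 (k+1)) = pvar k"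
    and v4: "\<And>i j. 2 \<le> i \<Longrightarrow> i \<le> n+1 \<Longrightarrow> 1 \<le> j \<Longrightarrow> j \<le> n+1 \<Longrightarrow> j \<noteq> i \<Longrightarrow> \<phi>1 (Emat i j) = 0"
    and X: "X \<in> sl n"
  shows "\<phi>1 X = psi n X"
proof -
  define R where "R = {1..n+1}"
  have fin: "finite R" by (simp add: R_def)
  have zero_sl: "(\<lambda>i j. 0) \<in> sl n" by (simp add: sl_def)
  have phi0: "\<phi>1 (\<lambda>i j. 0) = 0"
    using lin_smult[OF zero_sl, of 0] by (simp add: mconst_simps)
  have phi_sum: "\<phi>1 (\<lambda>i j. \<Sum>x\<in>T. f x i j) = (\<Sum>x\<in>T. \<phi>1 (f x))"
    if "\<And>x. x \<in> T \<Longrightarrow> f x \<in> sl n" for T and f :: "'a \<Rightarrow> cmat"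
    using that
  proof (induction T rule: infinite_finite_induct)
    case (infinite A) thus ?case by (simp add: phi0)
  next
    case empty thus ?case by (simp add: phi0)
  next
    case (insert x F)
    have s: "(\<lambda>i j. \<Sum>y\<in>F. f y i j) \<in> sl n" using insert by (intro sl_sum) auto
    have "\<phi>1 (\<lambda>i j. \<Sum>y\<in>insert x F. f y i j) = \<phi>1 (\<lambda>i j. f x i j + (\<lambda>i j. \<Sum>y\<in>F. f y i j) i j)"
      using insert by simp
    also have "\<dots> = \<phi>1 (f x) + \<phi>1 (\<lambda>i j. \<Sum>y\<in>F. f y i j)"
      using lin_add[OF _ s, of "f x"] insert by simp
    finally show ?case using insert by simp
  qed
  define c where "c k = (\<Sum>m=1..k. X m m)" for k
  define A where "A = (\<lambda>i j. \<Sum>a\<in>R. \<Sum>b\<in>R-{a}. X a b * Emat a b i j)"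
  define B where "B = (\<lambda>i j. \<Sum>k=1..n. c k * (Emat k k i j - Emat (k+1) (k+1) i j))"
  have Asl: "(\<lambda>i j. \<Sum>b\<in>R-{a}. X a b * Emat a b i j) \<in> sl n" if "a \<in> R" for a
    using that by (intro sl_sum smult_sl Emat_sl) (auto simp: R_def)
  have Bsl: "B \<in> sl n" unfolding B_def
    by (intro sl_sum smult_sl H_sl) auto
  have Asl': "A \<in> sl n" unfolding A_def by (intro sl_sum Asl)
  have XAB: "X = (\<lambda>i j. A i j + B i j)"
  proof (intro ext)
    fix i j
    have inner: "(\<Sum>b\<in>R-{a}. X a b * Emat a b i j) = (if a = i then (if j \<in> R-{a} then X a j else 0) else 0)" for a
    proof (cases "a = i")
      case True
      have "(\<Sum>b\<in>R-{a}. X a b * Emat a b i j) = (\<Sum>b\<in>R-{a}. if j = b then X a b else 0)"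
        using True by (intro sum.cong refl) (simp add: Emat_def)
      thus ?thesis using True fin by simp
    next
      case False thus ?thesis by (simp add: Emat_def)
    qed
    have Aij: "A i j = (if i \<in> R \<and> j \<in> R \<and> i \<noteq> j then X i j else 0)"
      unfolding A_def inner using fin by (simp add: sum.delta)
    show "X i j = A i j + B i j"
    proof (cases "i = j")
      case False
      have "B i j = 0" unfolding B_def by (rule sum.neutral) (use False in \<open>auto simp: Emat_def\<close>)
      moreover have "i \<notin> R \<or> j \<notin> R \<Longrightarrow> X i j = 0" using X by (auto simp: sl_def R_def)
      ultimately show ?thesis using Aij False by auto
    next
      case True
      have Bii: "B i i = (\<Sum>k=1..n. if k = i then c k else 0) - (\<Sum>k=1..n. if k + 1 = i then c k else 0)"
      proof -
        have "B i i = (\<Sum>k=1..n. (if k = i then c k else 0) - (if k + 1 = i then c k else 0))"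
          unfolding B_def by (intro sum.cong refl) (auto simp: Emat_def)
        thus ?thesis by (simp only: sum_subtractf)
      qed
      have tr: "(\<Sum>m=1..n+1. X m m) = 0" using X by (simp add: sl_def)
      have "X i i = B i i"
      proof -
        consider "i = 0" | "i = 1" | "2 \<le> i \<and> i \<le> n" | "i = n + 1" | "i > n + 1" by linarith
        thus ?thesis
        proof cases
          case 1 show ?thesis unfolding Bii using 1 X by (simp add: sl_def)
        next
          case 2 show ?thesis unfolding Bii using 2 n by (simp add: c_def)
        next
          case 3
          hence "(\<Sum>k=1..n. if k + 1 = i then c k else 0) = c (i - 1)"
            by (subst sum.cong[OF refl, of _ _ "\<lambda>k. if k = i - 1 then c k else 0"]) auto
          moreover have "c i = c (i - 1) + X i i"
          proof -
            obtain m where m: "i = Suc m" using 3 by (cases i) auto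
            show ?thesis unfolding c_def m by simp
          qed
          ultimately show ?thesis unfolding Bii using 3 by simp
        next
          case 4
          have "(\<Sum>k=1..n. if k + 1 = i then c k else 0) = c n"
            using 4 n by (subst sum.cong[OF refl, of _ _ "\<lambda>k. if k = n then c k else 0"]) auto
          moreover have "c n + X (n+1) (n+1) = 0" using tr n unfolding c_def by simp
          ultimately show ?thesis unfolding Bii using 4 by (simp add: eq_neg_iff_add_eq_0 add.commute)
        next
          case 5 show ?thesis unfolding Bii using 5 X by (simp add: sl_def)
        qed
      qed
      thus ?thesis using Aij True by simp
    qed
  qed
  have "\<phi>1 X = \<phi>1 A + \<phi>1 B" using XAB lin_add[OF Asl' Bsl] by simp
  also have "\<phi>1 A = (\<Sum>a\<in>R. \<Sum>b\<in>R-{a}. mconst (X a b) * \<phi>1 (Emat a b))"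
  proof -
    have "\<phi>1 A = (\<Sum>a\<in>R. \<phi>1 (\<lambda>i j. \<Sum>b\<in>R-{a}. X a b * Emat a b i j))"
      unfolding A_def by (rule phi_sum) (rule Asl)
    also have "\<dots> = (\<Sum>a\<in>R. \<Sum>b\<in>R-{a}. \<phi>1 (\<lambda>i j. X a b * Emat a b i j))"
      by (intro sum.cong refl phi_sum smult_sl Emat_sl) (auto simp: R_def)
    also have "\<dots> = (\<Sum>a\<in>R. \<Sum>b\<in>R-{a}. mconst (X a b) * \<phi>1 (Emat a b))"
      by (intro sum.cong refl lin_smult Emat_sl) (auto simp: R_def)
    finally show ?thesis .
  qed
  also have "\<dots> = (\<Sum>b\<in>R-{1}. mconst (X 1 b) * V b)"
  proof -
    have "(\<Sum>a\<in>R. \<Sum>b\<in>R-{a}. mconst (X a b) * \<phi>1 (Emat a b)) = (\<Sum>a\<in>R. if a = 1 then (\<Sum>b\<in>R-{1}. mconst (X 1 b) * V b) else 0)"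
    proof (intro sum.cong refl)
      fix a assume a: "a \<in> R"
      show "(\<Sum>b\<in>R-{a}. mconst (X a b) * \<phi>1 (Emat a b)) = (if a = 1 then (\<Sum>b\<in>R-{1}. mconst (X 1 b) * V b) else 0)"
      proof (cases "a = 1")
        case True
        have "\<phi>1 (Emat 1 b) = V b" if "b \<in> R - {1}" for b
          using that v3[of "b - 1"] by (auto simp: R_def V_def)
        thus ?thesis using True by simp
      next
        case False
        thus ?thesis using a v4 by (auto simp: R_def)
      qed
    qed
    also have "\<dots> = (\<Sum>b\<in>R-{1}. mconst (X 1 b) * V b)" using fin by (simp add: R_def)
    finally show ?thesis .
  qed
  also have "\<phi>1 B = mconst (X 1 1)"
  proof -
    have "\<phi>1 B = (\<Sum>k=1..n. \<phi>1 (\<lambda>i j. c k * (Emat k k i j - Emat (k+1) (k+1) i j)))"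
      unfolding B_def by (intro phi_sum smult_sl H_sl) auto
    also have "\<dots> = (\<Sum>k=1..n. mconst (c k) * \<phi>1 (\<lambda>i j. Emat k k i j - Emat (k+1) (k+1) i j))"
      by (intro sum.cong refl lin_smult H_sl) auto
    also have "\<dots> = (\<Sum>k=1..n. if k = 1 then mconst (c 1) else 0)"
    proof (intro sum.cong refl)
      fix k assume k: "k \<in> {1..n}"
      show "mconst (c k) * \<phi>1 (\<lambda>i j. Emat k k i j - Emat (k+1) (k+1) i j) = (if k = 1 then mconst (c 1) else 0)"
      proof (cases "k = 1")
        case True thus ?thesis using v1 by (simp add: numeral_2_eq_2)
      next
        case False thus ?thesis using v2[of k] k by simp
      qed
    qed
    also have "\<dots> = mconst (X 1 1)" using n by (simp add: c_def)
    finally show ?thesis .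
  qed
  also have "(\<Sum>b\<in>R-{1}. mconst (X 1 b) * V b) + mconst (X 1 1) = psi n X"
  proof -
    have "psi n X = mconst (X 1 1) * V 1 + (\<Sum>b\<in>R-{1}. mconst (X 1 b) * V b)"
      unfolding psi_def R_def[symmetric] using fin by (subst sum.remove[of R 1]) (auto simp: R_def)
    thus ?thesis by (simp add: V_def)
  qed
  finally show ?thesis .
qed


lemma comm_sl: assumes X: "X \<in> sl n" and Y: "Y \<in> sl n" shows "commutator n X Y \<in> sl n"
proof -
  have sX: "X i j = 0" and sY: "Y i j = 0" if "\<not> (i \<in> {1..n+1} \<and> j \<in> {1..n+1})" for i j
    using X Y that by (auto simp: sl_def)
  have supp: "commutator n X Y i j = 0" if "\<not> (i \<in> {1..n+1} \<and> j \<in> {1..n+1})" for i j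
  proof -
    have "mat_mult n X Y i j = 0" "mat_mult n Y X i j = 0"
      unfolding mat_mult_def using that sX sY by (auto intro!: sum.neutral)
    thus ?thesis by (simp add: commutator_def)
  qed
  have "(\<Sum>i=1..n+1. mat_mult n X Y i i) = (\<Sum>i=1..n+1. mat_mult n Y X i i)"
    unfolding mat_mult_def by (subst sum.swap) (simp add: mult.commute)
  hence "(\<Sum>i=1..n+1. commutator n X Y i i) = 0"
    by (simp add: commutator_def sum_subtractf)
  thus ?thesis using supp by (auto simp: sl_def)
qed

theorem proposition8p1:
  fixes n :: nat and \<phi>1 :: "cmat \<Rightarrow> mpoly" and a :: complex
  assumes n: "n \<ge> 1"
    and lin_add: "\<And>X Y. X \<in> sl n \<Longrightarrow> Y \<in> sl n \<Longrightarrow> \<phi>1 (\<lambda>i j. X i j + Y i j) = \<phi>1 X + \<phi>1 Y"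
    and lin_smult: "\<And>c X. X \<in> sl n \<Longrightarrow> \<phi>1 (\<lambda>i j. c * X i j) = mconst c * \<phi>1 X"
    and v1: "\<phi>1 (\<lambda>i j. Emat 1 1 i j - Emat 2 2 i j) = 1"
    and v2: "\<And>k. 2 \<le> k \<Longrightarrow> k \<le> n \<Longrightarrow> \<phi>1 (\<lambda>i j. Emat k k i j - Emat (k+1) (k+1) i j) = 0"
    and v3: "\<And>k. 1 \<le> k \<Longrightarrow> k \<le> n \<Longrightarrow> \<phi>1 (Emat 1 (k+1)) = pvar k"
    and v4: "\<And>i j. 2 \<le> i \<Longrightarrow> i \<le> n+1 \<Longrightarrow> 1 \<le> j \<Longrightarrow> j \<le> n+1 \<Longrightarrow> j \<noteq> i \<Longrightarrow> \<phi>1 (Emat i j) = 0"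
  shows "\<forall>X\<in>sl n. \<forall>Y\<in>sl n.
           Phi n \<phi>1 a (commutator n X Y) = star_bracket_fps n (Phi n \<phi>1 a X) (Phi n \<phi>1 a Y)"
proof (intro ballI)
  fix X Y assume X: "X \<in> sl n" and Y: "Y \<in> sl n"
  have pp: "\<phi>1 Z = psi n Z" if "Z \<in> sl n" for Z
    apply (rule phi1_psi)
           apply (rule n)
          apply (erule (1) lin_add)
         apply (erule lin_smult)
        apply (rule v1)
       apply (erule (1) v2)
      apply (erule (1) v3)
     apply (erule (4) v4)
    apply (rule that)
    done
  define f where "f Z i = (if i = 0 then tilde n Z else if i = 1 then mconst a * psi n Z else 0)" for Z and i :: nat
  have nth: "fps_nth (Phi n \<phi>1 a Z) i = f Z i" if "Z \<in> sl n" for Z i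
    using pp[of Z] that by (cases i) (simp_all add: Phi_def f_def)
  have qbf: "qb n 1 (f Z i)" for Z i
    using qb_tilde[of n Z] qb_smult[OF qb_psi[of n Z], of a] by (simp add: f_def)
  let ?C = "commutator n X Y"
  have C: "?C \<in> sl n" by (rule comm_sl[OF X Y])
  show "Phi n \<phi>1 a ?C = star_bracket_fps n (Phi n \<phi>1 a X) (Phi n \<phi>1 a Y)"
  proof (rule fps_ext)
    fix k
    have rhs: "fps_nth (star_bracket_fps n (Phi n \<phi>1 a X) (Phi n \<phi>1 a Y)) k = (\<Sum>i\<le>k. PB n (f X i) (f Y (k - i)))"
      unfolding star_bracket_fps_def using X Y by (simp add: nth star_PB[OF qbf qbf])
    show "fps_nth (Phi n \<phi>1 a ?C) k = fps_nth (star_bracket_fps n (Phi n \<phi>1 a X) (Phi n \<phi>1 a Y)) k"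
      unfolding rhs nth[OF C]
    proof -
      consider "k = 0" | "k = 1" | "k \<ge> 2" by linarith
      thus "f ?C k = (\<Sum>i\<le>k. PB n (f X i) (f Y (k - i)))"
      proof cases
        case 1 thus ?thesis by (simp add: f_def PB_tilde)
      next
        case 2
        have "(\<Sum>i\<le>k. PB n (f X i) (f Y (k - i))) = PB n (f X 0) (f Y 1) + PB n (f X 1) (f Y 0)"
          using 2 by (simp add: atMost_Suc)
        also have "\<dots> = mconst a * (PB n (tilde n X) (psi n Y) + PB n (psi n X) (tilde n Y))"
          by (simp add: f_def PB_smult_left PB_smult_right distrib_left)
        also have "\<dots> = f ?C k" using 2 by (simp add: PB_tilde_psi f_def)
        finally show ?thesis ..
      next
        case 3
        have "PB n (f X i) (f Y (k - i)) = 0" if "i \<le> k" for i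
        proof -
          consider "i = 0" | "i = 1" | "i \<ge> 2" by linarith
          thus ?thesis
          proof cases
            case 1 thus ?thesis using 3 by (simp add: f_def)
          next
            case 2
            show ?thesis
            proof (cases "k = 2")
              case True thus ?thesis using 2 by (simp add: f_def PB_smult_left PB_smult_right PB_psi_psi)
            next
              case False thus ?thesis using 2 3 by (simp add: f_def)
            qed
          next
            case 3 thus ?thesis by (simp add: f_def)
          qed
        qed
        hence "(\<Sum>i\<le>k. PB n (f X i) (f Y (k - i))) = 0" by simp
        thus ?thesis using 3 by (simp add: f_def)
      qed
    qed
  qed
qed

end
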